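(* For $0<y<x\le1$ let $$f(x,y)=x^2y^2\,\frac{2(2-x-y)-\frac{(x-y)^2}{2-x-y}}{(x-y)^2},\qquad g(x,y)=x^2y^2\,\frac{2(2-x-y)-\frac{(x-y)^2}{2(2-x-y)}}{(x-y)^2},$$ $$B_2(x,y)=\frac{x+y+\frac14\,\frac{\left((x+y)\frac{f(x,y)}{xy}-xy\right)^2}{g(x,y)}}{\sqrt{x+\frac{g(x,y)}{xy}}}.$$ If $0<y<x\le1$, then $B_2(x,y)>0.9$. *)

theory Defs
  imports Complex_Main
begin

definition f4 :: "real \<Rightarrow> real \<Rightarrow> real" where
  "f4 x y = x^2 * y^2 * ((2 * (2 - x - y) - (x - y)^2 / (2 - x - y)) / (x - y)^2)"

definition g4 :: "real \<Rightarrow> real \<Rightarrow> real" where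
  "g4 x y = x^2 * y^2 * ((2 * (2 - x - y) - (x - y)^2 / (2 * (2 - x - y))) / (x - y)^2)"

definition B2 :: "real \<Rightarrow> real \<Rightarrow> real" where
  "B2 x y = (x + y + (1/4) * ((x + y) * f4 x y / (x * y) - x * y)^2 / g4 x y)
            / sqrt (x + g4 x y / (x * y))"

end

theory Submission
  imports Defs
begin

lemma key_nonneg:
  fixes a b c :: real
  assumes "0 \<le> a" "0 \<le> b" "0 \<le> c"
  shows "0 \<le> 256*a^0*b^4*c^8 + (26816/25)*a^0*b^5*c^7 + (45664/25)*a^0*b^6*c^6 + (40608/25)*a^0*b^7*c^5 + 817*a^0*b^8*c^4 + (1196/5)*a^0*b^9*c^3 + (1068/25)*a^0*b^10*c^2 + (147/25)*a^0*b^11*c^1 + (19/25)*a^0*b^12*c^0 + (30464/25)*a^1*b^3*c^8 + (144704/25)*a^1*b^4*c^7 + (270736/25)*a^1*b^5*c^6 + (262408/25)*a^1*b^6*c^5 + (29232/5)*a^1*b^7*c^4 + (49412/25)*a^1*b^8*c^3 + (10457/25)*a^1*b^9*c^2 + (2781/50)*a^1*b^10*c^1 + (233/50)*a^1*b^11*c^0 + (132864/25)*a^2*b^2*c^8 + (577152/25)*a^2*b^3*c^7 + (1018896/25)*a^2*b^4*c^6 + (949032/25)*a^2*b^5*c^5 + (102136/5)*a^2*b^6*c^4 + (164812/25)*a^2*b^7*c^3 + (31851/25)*a^2*b^8*c^2 + (6761/50)*a^2*b^9*c^1 + (176/25)*a^2*b^10*c^0 + 8192*a^3*b^1*c^8 +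 (849664/25)*a^3*b^2*c^7 + (1437824/25)*a^3*b^3*c^6 + (1281232/25)*a^3*b^4*c^5 + (130344/5)*a^3*b^5*c^4 + (38776/5)*a^3*b^6*c^3 + (33212/25)*a^3*b^7*c^2 + (2837/25)*a^3*b^8*c^1 + (157/50)*a^3*b^9*c^0 + 4096*a^4*b^0*c^8 + 16384*a^4*b^1*c^7 + 26624*a^4*b^2*c^6 + 22528*a^4*b^3*c^5 + 10624*a^4*b^4*c^4 + 2816*a^4*b^5*c^3 + 416*a^4*b^6*c^2 + 32*a^4*b^7*c^1 + 1*a^4*b^8*c^0"
  using assms by (intro add_nonneg_nonneg mult_nonneg_nonneg zero_le_power) simp_all

lemma key_id:
  fixes x y :: real
  shows "(2*(2-x-y)^3*(x-y)^2*(x+y) + ((x+y)*(2-x-y)^2-(x-y)^2)^2)^2 - 81/100*(x*4*(2-x-y)^6*(x-y)^4 + x*y*(4*(2-x-y)^2-(x-y)^2)*2*(2-x-y)^5*(x-y)^2)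
   = 256*y^0*(x-y)^4*(1-x)^8 + (26816/25)*y^0*(x-y)^5*(1-x)^7 + (45664/25)*y^0*(x-y)^6*(1-x)^6 + (40608/25)*y^0*(x-y)^7*(1-x)^5 + 817*y^0*(x-y)^8*(1-x)^4 + (1196/5)*y^0*(x-y)^9*(1-x)^3 + (1068/25)*y^0*(x-y)^10*(1-x)^2 + (147/25)*y^0*(x-y)^11*(1-x)^1 + (19/25)*y^0*(x-y)^12*(1-x)^0 + (30464/25)*y^1*(x-y)^3*(1-x)^8 + (144704/25)*y^1*(x-y)^4*(1-x)^7 + (270736/25)*y^1*(x-y)^5*(1-x)^6 + (262408/25)*y^1*(x-y)^6*(1-x)^5 + (29232/5)*y^1*(x-y)^7*(1-x)^4 + (49412/25)*y^1*(x-y)^8*(1-x)^3 + (10457/25)*y^1*(x-y)^9*(1-x)^2 + (2781/50)*y^1*(x-y)^10*(1-x)^1 + (233/50)*y^1*(x-y)^11*(1-x)^0 + (132864/25)*y^2*(x-y)^2*(1-x)^8 + (577152/25)*y^2*(x-y)^3*(1-x)^7 + (1018896/25)*y^2*(x-y)^4*(1-x)^6 + (949032/25)*y^2*(x-y)^5*(1-x)^5 + (102136/5)*y^2*(x-y)^6*(1-x)^4 + (164812/25)*y^2*(x-y)^7*(1-x)^3 + (31851/25)*y^2*(x-y)^8*(1-x)^2 + (6761/50)*y^2*(x-y)^9*(1-x)^1 + (176/25)*y^2*(x-y)^10*(1-x)^0 + 8192*y^3*(x-y)^1*(1-x)^8 + (849664/25)*y^3*(x-y)^2*(1-x)^7 +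 (1437824/25)*y^3*(x-y)^3*(1-x)^6 + (1281232/25)*y^3*(x-y)^4*(1-x)^5 + (130344/5)*y^3*(x-y)^5*(1-x)^4 + (38776/5)*y^3*(x-y)^6*(1-x)^3 + (33212/25)*y^3*(x-y)^7*(1-x)^2 + (2837/25)*y^3*(x-y)^8*(1-x)^1 + (157/50)*y^3*(x-y)^9*(1-x)^0 + 4096*y^4*(x-y)^0*(1-x)^8 + 16384*y^4*(x-y)^1*(1-x)^7 + 26624*y^4*(x-y)^2*(1-x)^6 + 22528*y^4*(x-y)^3*(1-x)^5 + 10624*y^4*(x-y)^4*(1-x)^4 + 2816*y^4*(x-y)^5*(1-x)^3 + 416*y^4*(x-y)^6*(1-x)^2 + 32*y^4*(x-y)^7*(1-x)^1 + 1*y^4*(x-y)^8*(1-x)^0"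
  by algebra

lemma key_xy:
  fixes x y :: real
  assumes "0 \<le> y" "y \<le> x" "x \<le> 1"
  shows "81/100*(x*4*(2-x-y)^6*(x-y)^4 + x*y*(4*(2-x-y)^2-(x-y)^2)*2*(2-x-y)^5*(x-y)^2) \<le> (2*(2-x-y)^3*(x-y)^2*(x+y) + ((x+y)*(2-x-y)^2-(x-y)^2)^2)^2"
proof -
  have "0 \<le> y" "0 \<le> x - y" "0 \<le> 1 - x" using assms by simp_all
  note h = key_nonneg[OF this]
  show ?thesis using h key_id[of x y] by linarith
qed

theorem lemma4:
  fixes x y :: real
  assumes "0 < y" and "y < x" and "x \<le> 1"
  shows "B2 x y > 0.9"
proof -
  define s where "s = 2 - x - y"
  define u where "u = x + y"
  define r where "r = (x - y) / s"
  define p where "p = x * y"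
  have s0: "s > 0" using assms by (simp add: s_def)
  have su: "s = 2 - u" by (simp add: s_def u_def)
  have d: "x - y = s * r" using s0 by (simp add: r_def)
  have r0: "r > 0" using assms s0 by (simp add: r_def)
  have r1: "r \<le> 1" using assms s0 by (simp add: r_def s_def)
  have u0: "0 < u" "u < 2" using assms by (auto simp: u_def)
  have ru: "(2-u)*r < u" using assms d su u_def by auto
  have xe: "x = (u + s*r)/2" using d u_def by simp
  have pe: "p = (u^2 - s^2*r^2)/4" using d u_def p_def by (simp add: power2_eq_square algebra_simps)
  have p0: "p > 0" using assms by (simp add: p_def)
  have xy2: "x^2*y^2 = p^2" by (simp add: p_def power_mult_distrib)
  have f: "f4 x y = p^2*(2-r^2)/(s*r^2)"
    unfolding f4_def s_def[symmetric] d xy2 using s0 r0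
    by (simp add: power_mult_distrib field_simps power2_eq_square)
  have g: "g4 x y = p^2*(4-r^2)/(2*s*r^2)"
    unfolding g4_def s_def[symmetric] d xy2 using s0 r0
    by (simp add: power_mult_distrib field_simps power2_eq_square)
  define T where "T = 2*(u-r^2)^2/(s*r^2*(4-r^2))"
  define R where "R = p*(4-r^2)/(2*s*r^2)"
  define L where "L = (u-r^2)^2/(2*s*r^2)"
  have r4: "4 - r^2 > 0" using r0 r1 by (smt (verit) power_le_one)
  have h1: "(x+y)*f4 x y/(x*y) - x*y = 2*p*(u-r^2)/(s*r^2)"
    unfolding f u_def[symmetric] p_def[symmetric] using s0 r0 p0
    by (simp add: field_simps su power2_eq_square)
  have hT: "(1/4) * ((x + y) * f4 x y / (x * y) - x * y)^2 / g4 x y = T"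
    unfolding h1 g T_def using s0 r0 p0 r4
    by (simp add: field_simps power2_eq_square)
  have hR: "g4 x y / (x*y) = R"
    unfolding g R_def p_def[symmetric] using p0 s0 r0 by (simp add: field_simps power2_eq_square)
  have B: "B2 x y = (u + T) / sqrt (x + R)"
    unfolding B2_def hR using hT by (simp add: u_def)
  have c0: "2*s*r^2 > 0" using s0 r0 by simp
  have v0: "u - r^2 > 0"
  proof (rule ccontr)
    assume "\<not> u - r^2 > 0"
    hence h: "u \<le> r^2" by simp
    have "r^2 \<le> r" using r0 r1 by (simp add: power2_eq_square mult_left_le)
    hence "u \<le> r" using h by simp
    hence "(2-u)*u \<le> (2-u)*r" using u0 by (simp add: mult_left_mono)
    hence "(2-u)*u < u" using ru by simp
    hence "u > 1" using u0 by (smt (verit) mult_le_cancel_right1)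
    moreover have "r^2 \<le> 1" using r0 r1 by (simp add: power_le_one)
    ultimately show False using h by simp
  qed
  have LT: "L < T"
  proof -
    have "L = 2*(u-r^2)^2/(4*(s*r^2))" by (simp add: L_def)
    also have "\<dots> < 2*(u-r^2)^2/(s*r^2*(4-r^2))"
    proof (rule divide_strict_left_mono)
      show "s*r^2*(4-r^2) < 4*(s*r^2)" using s0 r0 by (simp add: algebra_simps)
      show "0 < 2*(u-r^2)^2" using v0 by simp
      show "0 < 4*(s*r^2) * (s*r^2*(4-r^2))" using s0 r0 r4 by simp
    qed
    finally show ?thesis by (simp add: T_def)
  qed
  have K0: "81/100*(x*4*s^6*(s*r)^4 + p*(4*s^2-(s*r)^2)*2*s^5*(s*r)^2) \<le> (2*s^3*(s*r)^2*u + (u*s^2-(s*r)^2)^2)^2"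
    using key_xy[of y x] assms unfolding s_def[symmetric] u_def[symmetric] p_def[symmetric] d by simp
  have K1: "81/100*(x*4*s^6*(s*r)^4 + p*(4*s^2-(s*r)^2)*2*s^5*(s*r)^2) = s^8 * (81/100*x*4*s^2*r^4 + 81/100*p*(4-r^2)*2*s*r^2)"
    by algebra
  have K1': "(2*s^3*(s*r)^2*u + (u*s^2-(s*r)^2)^2)^2 = s^8 * (2*s*r^2*u + (u-r^2)^2)^2"
    by algebra
  have K: "(2*s*r^2*u + (u-r^2)^2)^2 \<ge> 81/100*x*4*s^2*r^4 + 81/100*p*(4-r^2)*2*s*r^2"
    using K0 unfolding K1 K1' using s0 by (simp add: mult_le_cancel_left_pos)
  have e1: "(u+L)*(2*s*r^2) = 2*s*r^2*u + (u-r^2)^2"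
    unfolding L_def distrib_right using s0 r0 by simp
  have e2: "(x+R)*(2*s*r^2)^2 = x*4*s^2*r^4 + p*(4-r^2)*2*s*r^2"
    unfolding R_def using s0 r0 by (simp add: field_simps power2_eq_square power4_eq_xxxx)
  have A: "(u+L)^2*(2*s*r^2)^2 = (2*s*r^2*u + (u-r^2)^2)^2"
    by (simp only: e1[symmetric] power_mult_distrib)
  have B': "(81/100*(x+R))*(2*s*r^2)^2 = 81/100*x*4*s^2*r^4 + 81/100*p*(4-r^2)*2*s*r^2"
  proof -
    have "(81/100*(x+R))*(2*s*r^2)^2 = 81/100*((x+R)*(2*s*r^2)^2)" by (simp only: mult.assoc)
    also have "\<dots> = 81/100*(x*4*s^2*r^4 + p*(4-r^2)*2*s*r^2)" by (simp only: e2)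
    also have "\<dots> = 81/100*x*4*s^2*r^4 + 81/100*p*(4-r^2)*2*s*r^2" by (simp only: distrib_left mult.assoc)
    finally show ?thesis .
  qed
  have "(81/100*(x+R))*(2*s*r^2)^2 \<le> (u+L)^2*(2*s*r^2)^2"
    using A B' K by linarith
  hence K2: "(u+L)^2 \<ge> 81/100*(x+R)"
    by (rule mult_right_le_imp_le) (use s0 r0 in simp)
  have R0: "R > 0" unfolding R_def using p0 r4 c0 s0 r0 by simp
  have xR: "x + R > 0" using R0 assms by simp
  have L0: "L \<ge> 0" unfolding L_def using s0 by simp
  have sq: "(sqrt (x+R))^2 = x + R" using xR by simp
  have "(0.9 * sqrt (x+R))^2 = 0.81 * (x+R)" by (simp only: power_mult_distrib sq) (simp add: power2_eq_square algebra_simps)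
  also have "\<dots> \<le> (u+L)^2" using K2 by simp
  also have "\<dots> < (u+T)^2" using LT L0 u0 by (simp add: power_strict_mono)
  finally have "(0.9 * sqrt (x+R))^2 < (u+T)^2" .
  hence "0.9 * sqrt (x+R) < u + T"
    by (rule power_less_imp_less_base) (use L0 LT u0 in simp)
  moreover have "sqrt (x+R) > 0" using xR by simp
  ultimately show ?thesis unfolding B by (simp add: pos_less_divide_eq)
qed

end
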